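(* Let $G=(V,\mathcal{E})$ be the labeled graph associated with a tensor product (either the externally labeled graph $G^E(\pi)$ or the skeleton $G(\pi)$), and for an ordered partition $\Pi$ of $V$ let $\mathcal{E}(\pi,\Pi)=\{\theta(p(i,\Pi),p(j,\Pi)) : \theta(i,j)\in\mathcal{E}\}$. If $\Pi_1\prec\Pi_2$ are ordered partitions of $V$, then $\mathcal{E}(\pi,\Pi_1)>\mathcal{E}(\pi,\Pi_2)$.
   Context: Setting: a tensor product with factor set $S$ and slot set $\Omega$ is encoded by a coloring $\pi$ of $\Omega$ by index symbols (external symbols used once, internal symbols exactly twice, each symbol having a type). Its graph has vertex set $V=\Omega\cup\{0\}$ ($0$ an auxiliary vertex, omitted if there are no external indices) and labeled edges: $\{0,j\}$ for every slot $j$ carrying an external index, and $\{i,j\}$ for every pair of slots $i\ne j$ carrying the same internal index; a labeled edge $\theta(u,v)$ is the unordered pair $\{u,v\}$ with a label $\mathrm{type}[\mathrm{index}]$ (in $G^E(\pi)$ external edges carry the specific external symbol and internal edges a generic index; in $G(\pi)$ all edges carry a generic index). An ordered partition of $V$ is a sequence $\Pi=(\Pi_1,\dots,\Pi_r)$ of nonempty pairwise disjoint cells with union $V$. $\Pi\preceq\Pi'$ ($\Pi$ finer than $\Pi'$) if every cell of $\Pi'$ is a union of consecutive cells of $\Pi$; $\Pi\prec\Pi'$ means $\Pi\preceq\Pi'$ and $\Pi\neq\Pi'$. The position of $v\in\Pi_k$ is $p(v,\Pi)=1+\sum_{i=1}^{k-1}|\Pi_i|$. Labeled edge sets are compared lexicographically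 as sorted lists (with multiplicity) of labeled edges, each labeled edge $\theta(u,v)$ being compared lexicographically by its vertex pair (written with the smaller vertex first) and then by its label under a fixed total order of labels. *)

theory Defs
  imports Main "HOL-Library.Multiset" "HOL-Library.List_Lexorder" "HOL-Library.Product_Lexorder"
begin

text \<open>A tensor product: slot set Omega, coloring pi of slots by index symbols,
  set Ext of external symbols (all other symbols are internal), and a type for every symbol.\<close>

definition tensor_product :: "'s set \<Rightarrow> ('s \<Rightarrow> 'i) \<Rightarrow> 'i set \<Rightarrow> bool" where
  "tensor_product Omega \<pi> Ext \<longleftrightarrow> finite Omega \<and>
     (\<forall>j\<in>Omega. card {k\<in>Omega. \<pi> k = \<pi> j} = (if \<pi> j \<in> Ext then 1 else 2))"

text \<open>Vertices: slots (Some j) plus the auxiliary vertex 0 (None), present iff there is an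
  external index.\<close>

definition graph_vertices :: "'s set \<Rightarrow> ('s \<Rightarrow> 'i) \<Rightarrow> 'i set \<Rightarrow> 's option set" where
  "graph_vertices Omega \<pi> Ext =
     Some ` Omega \<union> (if \<exists>j\<in>Omega. \<pi> j \<in> Ext then {None} else {})"

text \<open>The label of an edge is type[index],
  encoded injectively by lbl (type, Some symbol) for a specific symbol and
  lbl (type, None) for a generic index.  If specific is True this is the externally
  labeled graph G^E(pi), otherwise the skeleton G(pi).\<close>

definition graph_edges ::
  "bool \<Rightarrow> ('t \<Rightarrow> 'i option \<Rightarrow> 'l) \<Rightarrow> ('i \<Rightarrow> 't) \<Rightarrow> 's set \<Rightarrow> ('s \<Rightarrow> 'i) \<Rightarrow> 'i set
     \<Rightarrow> ('s option set \<times> 'l) set" where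
  "graph_edges specific lbl ty Omega \<pi> Ext =
     {({None, Some j}, lbl (ty (\<pi> j)) (if specific then Some (\<pi> j) else None)) | j.
        j \<in> Omega \<and> \<pi> j \<in> Ext}
   \<union> {({Some i, Some j}, lbl (ty (\<pi> i)) None) | i j.
        i \<in> Omega \<and> j \<in> Omega \<and> i \<noteq> j \<and> \<pi> i = \<pi> j \<and> \<pi> i \<notin> Ext}"

definition ordered_partition :: "'v set \<Rightarrow> 'v set list \<Rightarrow> bool" where
  "ordered_partition V P \<longleftrightarrow>
     (\<forall>C\<in>set P. C \<noteq> {}) \<and>
     (\<forall>i<length P. \<forall>j<length P. i \<noteq> j \<longrightarrow> P ! i \<inter> P ! j = {}) \<and>
     \<Union> (set P) = V"

definition finer :: "'v set list \<Rightarrow> 'v set list \<Rightarrow> bool" where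
  "finer P P' \<longleftrightarrow> (\<exists>qs. concat qs = P \<and> list_all2 (\<lambda>q C. q \<noteq> [] \<and> \<Union> (set q) = C) qs P')"

definition strictly_finer :: "'v set list \<Rightarrow> 'v set list \<Rightarrow> bool" where
  "strictly_finer P P' \<longleftrightarrow> finer P P' \<and> P \<noteq> P'"

definition pos :: "'v \<Rightarrow> 'v set list \<Rightarrow> nat" where
  "pos v P = 1 + (\<Sum>i < (THE k. k < length P \<and> v \<in> P ! k). card (P ! i))"

text \<open>E(pi,P): labeled edges with endpoints replaced by positions, written with the smaller
  position first; a multiset (positions may coincide), compared as sorted lists,
  lexicographically (vertex pair first, then label).\<close>

definition relabeled_edges :: "('v set \<times> 'l) set \<Rightarrow> 'v set list \<Rightarrow> ((nat \<times> nat) \<times> 'l::linorder) list" where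
  "relabeled_edges E P =
     sorted_list_of_multiset
       (image_mset (\<lambda>(e, l). ((Min ((\<lambda>v. pos v P) ` e), Max ((\<lambda>v. pos v P) ` e)), l))
         (mset_set E))"

end

theory Submission
  imports Defs
begin


lemma insort_mono:
  "list_all2 (\<le>) xs ys \<Longrightarrow> sorted xs \<Longrightarrow> sorted ys \<Longrightarrow> (a::'a::linorder) \<le> b
   \<Longrightarrow> list_all2 (\<le>) (insort a xs) (insort b ys)"
proof (induction xs ys arbitrary: a b rule: list_all2_induct)
  case Nil thus ?case by simp
next
  case (Cons x xs y ys)
  have ix: "insort x xs = x # xs" using Cons.prems by (simp add: insort_is_Cons)
  have iy: "insort y ys = y # ys" using Cons.prems by (simp add: insort_is_Cons)
  show ?case
  proof (cases "a \<le> x")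
    case True
    note ax = True
    show ?thesis
    proof (cases "b \<le> y")
      case True thus ?thesis using ax Cons by simp
    next
      case False
      have "list_all2 (\<le>) (insort x xs) (insort b ys)"
        using Cons False by (intro Cons.IH) auto
      thus ?thesis using ax False Cons ix by auto
    qed
  next
    case False
    note ax = False
    show ?thesis
    proof (cases "b \<le> y")
      case True
      have "list_all2 (\<le>) (insort a xs) (insort y ys)"
        using Cons False True by (intro Cons.IH) auto
      thus ?thesis using ax True Cons iy by auto
    next
      case False
      have "list_all2 (\<le>) (insort a xs) (insort b ys)"
        using Cons by (intro Cons.IH) auto
      thus ?thesis using ax False Cons by auto
    qed
  qed
qed

lemma sort_mono: "list_all2 (\<le>) xs (ys::'a::linorder list) \<Longrightarrow> list_all2 (\<le>) (sort xs) (sort ys)"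
  by (induction xs ys rule: list_all2_induct) (auto intro: insort_mono)

lemma lex_less: "list_all2 (\<le>) xs (ys::'a::linorder list) \<Longrightarrow> xs \<noteq> ys \<Longrightarrow> xs < ys"
  by (induction xs ys rule: list_all2_induct) (auto simp: le_less)

lemma filter_len_le: "\<forall>x\<in>set xs. Q x \<longrightarrow> P x \<Longrightarrow> length (filter Q xs) \<le> length (filter P xs)"
  by (induction xs) auto

lemma filter_len_less: "\<forall>x\<in>set xs. Q x \<longrightarrow> P x \<Longrightarrow> \<exists>x\<in>set xs. P x \<and> \<not> Q x
   \<Longrightarrow> length (filter Q xs) < length (filter P xs)"
proof (induction xs)
  case Nil thus ?case by simp
next
  case (Cons a xs)
  show ?case
  proof (cases "P a \<and> \<not> Q a")
    case True thus ?thesis using filter_len_le[of xs Q P] Cons.prems by auto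
  next
    case False
    hence "\<exists>x\<in>set xs. P x \<and> \<not> Q x" using Cons.prems by auto
    thus ?thesis using Cons False by auto
  qed
qed

lemma sorted_mset_less:
  fixes f g :: "'b \<Rightarrow> 'a::linorder"
  assumes "finite E" "\<forall>x\<in>E. f x \<le> g x" "\<exists>x\<in>E. f x < g x"
  shows "sorted_list_of_multiset (image_mset f (mset_set E)) < sorted_list_of_multiset (image_mset g (mset_set E))"
proof -
  obtain xs where xs: "set xs = E" "distinct xs" using finite_distinct_list assms(1) by blast
  have m: "mset_set E = mset xs" using xs mset_set_set by blast
  have la: "list_all2 (\<le>) (map f xs) (map g xs)"
    using assms(2) xs by (auto simp: list_all2_conv_all_nth)
  obtain x0 where x0: "x0 \<in> E" "f x0 < g x0" using assms(3) by blast
  have lt: "length (filter (\<lambda>x. g x0 \<le> f x) xs) < length (filter (\<lambda>x. g x0 \<le> g x) xs)"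
  proof (rule filter_len_less)
    show "\<forall>x\<in>set xs. g x0 \<le> f x \<longrightarrow> g x0 \<le> g x"
      using assms(2) xs by (meson order_trans)
    show "\<exists>x\<in>set xs. g x0 \<le> g x \<and> \<not> g x0 \<le> f x"
      using x0 xs by (intro bexI[of _ x0]) auto
  qed
  have "mset (map f xs) \<noteq> mset (map g xs)"
  proof
    assume h: "mset (map f xs) = mset (map g xs)"
    have "\<And>h. size (filter_mset (\<lambda>y. g x0 \<le> y) (mset (map h xs))) = length (filter (\<lambda>x. g x0 \<le> h x) xs)"
    proof -
      fix h
      have "filter_mset (\<lambda>y. g x0 \<le> y) (mset (map h xs)) = mset (filter (\<lambda>y. g x0 \<le> y) (map h xs))"
        by (rule mset_filter[symmetric])
      also have "filter (\<lambda>y. g x0 \<le> y) (map h xs) = map h (filter (\<lambda>x. g x0 \<le> h x) xs)"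
        by (simp add: filter_map comp_def)
      finally show "size (filter_mset (\<lambda>y. g x0 \<le> y) (mset (map h xs))) = length (filter (\<lambda>x. g x0 \<le> h x) xs)"
        by (metis length_map size_mset)
    qed
    from this[of f] this[of g] h show False using lt by simp
  qed
  hence "sort (map f xs) \<noteq> sort (map g xs)" by (metis mset_sort)
  hence "sort (map f xs) < sort (map g xs)" using lex_less sort_mono la by blast
  thus ?thesis unfolding m mset_map[symmetric] sorted_list_of_multiset_mset .
qed



definition before :: "'v set list \<Rightarrow> 'v \<Rightarrow> 'v set" where
  "before P v = {u. \<exists>ys zs. P = ys @ zs \<and> u \<in> \<Union>(set ys) \<and> v \<in> \<Union>(set zs)}"

lemma op_ne: "ordered_partition V P \<Longrightarrow> C \<in> set P \<Longrightarrow> C \<noteq> {}"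
  unfolding ordered_partition_def by (elim conjE) blast

lemma op_un: "ordered_partition V P \<Longrightarrow> \<Union>(set P) = V"
  unfolding ordered_partition_def by (elim conjE)

lemma beforeI: "P = ys @ zs \<Longrightarrow> u \<in> \<Union>(set ys) \<Longrightarrow> v \<in> \<Union>(set zs) \<Longrightarrow> u \<in> before P v"
  unfolding before_def by blast

lemma before_sub: "before P v \<subseteq> \<Union>(set P)"
  unfolding before_def by auto

lemma op_disj: "ordered_partition V P \<Longrightarrow> i < length P \<Longrightarrow> j < length P \<Longrightarrow> x \<in> P!i \<Longrightarrow> x \<in> P!j \<Longrightarrow> i = j"
  unfolding ordered_partition_def by blast

lemma pos_card:
  assumes op: "ordered_partition V P" and fin: "finite V" and v: "v \<in> V"
  shows "pos v P = 1 + card (before P v)"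
proof -
  have UV: "\<Union>(set P) = V" using op_un[OF op] .
  obtain k where k: "k < length P" "v \<in> P!k" using v UV by (auto simp: in_set_conv_nth)
  have uniq: "\<And>j. j < length P \<Longrightarrow> v \<in> P!j \<Longrightarrow> j = k" by (rule op_disj[OF op _ k(1) _ k(2)])
  have the: "(THE k. k < length P \<and> v \<in> P ! k) = k"
    using k uniq by (intro the_equality) blast+
  have st: "set (take k P) = (!) P ` {..<k}"
  proof
    show "set (take k P) \<subseteq> (!) P ` {..<k}"
      by (auto simp: in_set_conv_nth image_iff intro!: bexI)
    show "(!) P ` {..<k} \<subseteq> set (take k P)"
    proof
      fix x assume "x \<in> (!) P ` {..<k}"
      then obtain i where "i < k" "x = P!i" by auto
      thus "x \<in> set (take k P)" using k by (auto simp: in_set_conv_nth intro!: exI[of _ i])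
    qed
  qed
  have bef: "before P v = \<Union>(set (take k P))"
  proof
    show "\<Union>(set (take k P)) \<subseteq> before P v"
    proof
      fix u assume "u \<in> \<Union>(set (take k P))"
      moreover have "drop k P = P!k # drop (Suc k) P" using k by (simp add: Cons_nth_drop_Suc)
      hence "v \<in> \<Union>(set (drop k P))" using k by auto
      moreover have "P = take k P @ drop k P" by simp
      ultimately show "u \<in> before P v" by (intro beforeI[of P "take k P" "drop k P"]) auto
    qed
  next
    show "before P v \<subseteq> \<Union>(set (take k P))"
    proof
      fix u assume "u \<in> before P v"
      then obtain ys zs where yz: "P = ys @ zs" "u \<in> \<Union>(set ys)" "v \<in> \<Union>(set zs)"
        unfolding before_def by blast
      then obtain b where b: "b < length zs" "v \<in> zs!b" by (auto simp: in_set_conv_nth)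
      have "P!(length ys + b) = zs!b" using yz(1) by simp
      hence "length ys + b = k" using uniq b yz(1) by simp
      moreover have "ys = take (length ys) P" using yz(1) by simp
      ultimately have "set ys \<subseteq> set (take k P)"
        by (metis le_add1 set_take_subset_set_take)
      thus "u \<in> \<Union>(set (take k P))" using yz(2) by blast
    qed
  qed
  have "card (\<Union>(set (take k P))) = (\<Sum>i<k. card (P!i))"
    unfolding st
  proof (rule card_UN_disjoint)
    show "finite {..<k}" by simp
    show "\<forall>i\<in>{..<k}. finite (P ! i)"
    proof
      fix i assume "i \<in> {..<k}"
      hence "P!i \<in> set P" using k by simp
      hence "P!i \<subseteq> V" using UV by blast
      thus "finite (P!i)" using fin finite_subset by blast
    qed
    show "\<forall>i\<in>{..<k}. \<forall>j\<in>{..<k}. i \<noteq> j \<longrightarrow> P ! i \<inter> P ! j = {}"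
      using op k unfolding ordered_partition_def by auto
  qed
  thus ?thesis unfolding pos_def the bef by simp
qed

lemma union_concat: "list_all2 (\<lambda>q C. q \<noteq> [] \<and> \<Union> (set q) = C) us ys \<Longrightarrow> \<Union>(set (concat us)) = \<Union>(set ys)"
  by (induction us ys rule: list_all2_induct) auto

lemma before_mono: "finer P1 P2 \<Longrightarrow> before P2 v \<subseteq> before P1 v"
proof
  fix u assume f: "finer P1 P2" and u: "u \<in> before P2 v"
  obtain qs where qs: "concat qs = P1" "list_all2 (\<lambda>q C. q \<noteq> [] \<and> \<Union> (set q) = C) qs P2"
    using f unfolding finer_def by blast
  obtain ys zs where yz: "P2 = ys @ zs" "u \<in> \<Union>(set ys)" "v \<in> \<Union>(set zs)"
    using u unfolding before_def by blast
  obtain us ws where uw: "qs = us @ ws" "list_all2 (\<lambda>q C. q \<noteq> [] \<and> \<Union> (set q) = C) us ys"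
     "list_all2 (\<lambda>q C. q \<noteq> [] \<and> \<Union> (set q) = C) ws zs"
    using qs(2) unfolding yz(1) list_all2_append2 by blast
  have "P1 = concat us @ concat ws" using qs(1) uw(1) by simp
  moreover have "u \<in> \<Union>(set (concat us))" using union_concat[OF uw(2)] yz(2) by simp
  moreover have "v \<in> \<Union>(set (concat ws))" using union_concat[OF uw(3)] yz(3) by simp
  ultimately show "u \<in> before P1 v" by (rule beforeI)
qed

lemma not_before_same:
  assumes op: "ordered_partition V P" and i: "i < length P" "u \<in> P!i" "v \<in> P!i"
  shows "u \<notin> before P v"
proof
  assume "u \<in> before P v"
  then obtain ys zs where yz: "P = ys @ zs" "u \<in> \<Union>(set ys)" "v \<in> \<Union>(set zs)"
    unfolding before_def by blast
  obtain a where a: "a < length ys" "u \<in> ys!a" using yz(2) by (auto simp: in_set_conv_nth)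
  obtain b where b: "b < length zs" "v \<in> zs!b" using yz(3) by (auto simp: in_set_conv_nth)
  have "P!a = ys!a" using yz(1) a by (simp add: nth_append)
  hence "a = i" using op_disj[OF op, of a i u] a i yz(1) by simp
  moreover have "P!(length ys + b) = zs!b" using yz(1) by simp
  hence "length ys + b = i" using op_disj[OF op, of "length ys + b" i v] b i yz(1) by simp
  ultimately show False using a by simp
qed

lemma all_one: "list_all2 (\<lambda>q C. q \<noteq> [] \<and> \<Union> (set q) = C) qs P \<Longrightarrow> \<forall>q\<in>set qs. length q = 1 \<Longrightarrow> concat qs = P"
  by (induction qs P rule: list_all2_induct) (auto simp: length_Suc_conv)

lemma strict_exists:
  assumes op1: "ordered_partition V P1" and op2: "ordered_partition V P2" and sf: "strictly_finer P1 P2"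
  shows "\<exists>v\<in>V. \<exists>u. u \<in> before P1 v \<and> u \<notin> before P2 v"
proof -
  obtain qs where qs: "concat qs = P1" "list_all2 (\<lambda>q C. q \<noteq> [] \<and> \<Union> (set q) = C) qs P2"
    using sf unfolding strictly_finer_def finer_def by blast
  have "\<exists>q\<in>set qs. length q \<noteq> 1"
  proof (rule ccontr)
    assume "\<not> (\<exists>q\<in>set qs. length q \<noteq> 1)"
    hence "\<forall>q\<in>set qs. length q = 1" by blast
    hence "concat qs = P2" by (rule all_one[OF qs(2)])
    thus False using qs(1) sf unfolding strictly_finer_def by simp
  qed
  then obtain q where q: "q \<in> set qs" "length q \<noteq> 1" by blast
  then obtain qs1 qs2 where qsplit: "qs = qs1 @ q # qs2" using split_list[OF q(1)] by blast
  obtain ys rest where yr: "P2 = ys @ rest" "list_all2 (\<lambda>q C. q \<noteq> [] \<and> \<Union> (set q) = C) qs1 ys"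
     "list_all2 (\<lambda>q C. q \<noteq> [] \<and> \<Union> (set q) = C) (q # qs2) rest"
    using qs(2) unfolding qsplit list_all2_append1 by blast
  then obtain C zs where Cz: "rest = C # zs" "q \<noteq> []" "\<Union>(set q) = C"
    using yr(3) unfolding list_all2_Cons1 by blast
  obtain c1 q' where q1: "q = c1 # q'" using Cz(2) by (meson neq_Nil_conv)
  have "q' \<noteq> []" using q(2) q1 by auto
  then obtain c2 r where q2: "q' = c2 # r" by (meson neq_Nil_conv)
  have qc: "q = c1 # c2 # r" using q1 q2 by simp
  have P1eq: "P1 = (concat qs1 @ [c1]) @ (c2 # r @ concat qs2)"
    unfolding qs(1)[symmetric] qsplit qc by simp
  have c12: "c1 \<in> set P1" "c2 \<in> set P1" unfolding P1eq by simp_all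
  have "c1 \<noteq> {}" by (rule op_ne[OF op1 c12(1)])
  then obtain u where u: "u \<in> c1" by blast
  have "c2 \<noteq> {}" by (rule op_ne[OF op1 c12(2)])
  then obtain v where v: "v \<in> c2" by blast
  note uv = u v
  from P1eq have ub: "u \<in> before P1 v" by (rule beforeI) (use uv in auto)
  have PC: "P2 ! length ys = C" using yr(1) Cz(1) by simp
  have lP: "length ys < length P2" using yr(1) Cz(1) by simp
  have "u \<in> P2 ! length ys" "v \<in> P2 ! length ys" using Cz(3) qc uv PC by auto
  hence "u \<notin> before P2 v" by (rule not_before_same[OF op2 lP])
  moreover have "v \<in> V" using op_un[OF op1] c12(2) uv by blast
  ultimately show ?thesis using ub by blast
qed



lemma key_le:
  fixes f g :: "'v \<Rightarrow> nat" and l :: "'l::linorder"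
  assumes "f a \<le> g a" "f b \<le> g b"
  shows "((Min (f`{a,b}), Max (f`{a,b})), l) \<le> ((Min (g`{a,b}), Max (g`{a,b})), l)"
  using assms by (auto simp: less_eq_prod_def less_prod_def)

lemma key_less:
  fixes f g :: "'v \<Rightarrow> nat" and l :: "'l::linorder"
  assumes "f a < g a" "f b \<le> g b"
  shows "((Min (f`{a,b}), Max (f`{a,b})), l) < ((Min (g`{a,b}), Max (g`{a,b})), l)"
  using assms by (auto simp: less_eq_prod_def less_prod_def)

lemma gv_finite: "tensor_product Omega \<pi> Ext \<Longrightarrow> finite (graph_vertices Omega \<pi> Ext)"
  unfolding tensor_product_def graph_vertices_def by simp

lemma ge_finite:
  assumes "tensor_product Omega \<pi> Ext"
  shows "finite (graph_edges specific lbl ty Omega \<pi> Ext)"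
proof -
  have fO: "finite Omega" using assms unfolding tensor_product_def by simp
  have A: "finite {({None, Some j}, lbl (ty (\<pi> j)) (if specific then Some (\<pi> j) else None)) | j.
        j \<in> Omega \<and> \<pi> j \<in> Ext}"
    using fO by (intro finite_image_set) simp
  have "finite {({Some i, Some j}, lbl (ty (\<pi> i)) None) | i j. i \<in> Omega \<and> j \<in> Omega}"
    using fO by (intro finite_image_set2) simp_all
  hence B: "finite {({Some i, Some j}, lbl (ty (\<pi> i)) None) | i j.
        i \<in> Omega \<and> j \<in> Omega \<and> i \<noteq> j \<and> \<pi> i = \<pi> j \<and> \<pi> i \<notin> Ext}"
    by (rule finite_subset[rotated]) blast
  show ?thesis unfolding graph_edges_def using A B by simp
qed

lemma edge_form:
  assumes "x \<in> graph_edges specific lbl ty Omega \<pi> Ext"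
  shows "\<exists>a b l. x = ({a,b}, l) \<and> a \<noteq> b \<and> a \<in> graph_vertices Omega \<pi> Ext \<and> b \<in> graph_vertices Omega \<pi> Ext"
  using assms unfolding graph_edges_def graph_vertices_def by auto

lemma vertex_in_edge:
  assumes tp: "tensor_product Omega \<pi> Ext" and v: "v \<in> graph_vertices Omega \<pi> Ext"
  shows "\<exists>a l. ({v,a}, l) \<in> graph_edges specific lbl ty Omega \<pi> Ext"
proof (cases v)
  case None
  then obtain j where j: "j \<in> Omega" "\<pi> j \<in> Ext" using v unfolding graph_vertices_def by (auto split: if_splits)
  hence "({None, Some j}, lbl (ty (\<pi> j)) (if specific then Some (\<pi> j) else None)) \<in> graph_edges specific lbl ty Omega \<pi> Ext"
    unfolding graph_edges_def by (intro UnI1 CollectI exI[of _ j]) simp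
  thus ?thesis unfolding None by (intro exI) assumption
next
  case (Some j)
  hence j: "j \<in> Omega" using v unfolding graph_vertices_def by (auto split: if_splits)
  show ?thesis
  proof (cases "\<pi> j \<in> Ext")
    case True
    have "({None, Some j}, lbl (ty (\<pi> j)) (if specific then Some (\<pi> j) else None)) \<in> graph_edges specific lbl ty Omega \<pi> Ext"
      unfolding graph_edges_def using j True by (intro UnI1 CollectI exI[of _ j]) simp
    moreover have "{None, Some j} = {Some j, None}" by (rule insert_commute)
    ultimately have "({Some j, None}, lbl (ty (\<pi> j)) (if specific then Some (\<pi> j) else None)) \<in> graph_edges specific lbl ty Omega \<pi> Ext"
      by (simp only:)
    thus ?thesis unfolding Some by (intro exI) assumption
  next
    case False
    have "card {k\<in>Omega. \<pi> k = \<pi> j} = 2" using tp j False unfolding tensor_product_def by auto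
    moreover have "j \<in> {k\<in>Omega. \<pi> k = \<pi> j}" using j by simp
    ultimately have "card ({k\<in>Omega. \<pi> k = \<pi> j} - {j}) = 1" by (simp add: card_Diff_singleton)
    hence "{k\<in>Omega. \<pi> k = \<pi> j} - {j} \<noteq> {}" by (metis card.empty zero_neq_one)
    then obtain i where "i \<in> {k\<in>Omega. \<pi> k = \<pi> j} - {j}" by blast
    hence i: "i \<in> Omega" "\<pi> i = \<pi> j" "i \<noteq> j" by auto
    have "({Some j, Some i}, lbl (ty (\<pi> j)) None) \<in> graph_edges specific lbl ty Omega \<pi> Ext"
      unfolding graph_edges_def using i j False by (intro UnI2 CollectI exI[of _ j] exI[of _ i]) simp
    thus ?thesis unfolding Some by (intro exI) assumption
  qed
qed



theorem theorem5:
  fixes Omega :: "'s set" and \<pi> :: "'s \<Rightarrow> 'i" and Ext :: "'i set" and ty :: "'i \<Rightarrow> 't"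
    and lbl :: "'t \<Rightarrow> 'i option \<Rightarrow> 'l::linorder" and specific :: bool
    and P1 P2 :: "'s option set list"
  assumes "tensor_product Omega \<pi> Ext"
    and "inj (\<lambda>(t, x). lbl t x)"
    and "ordered_partition (graph_vertices Omega \<pi> Ext) P1"
    and "ordered_partition (graph_vertices Omega \<pi> Ext) P2"
    and "strictly_finer P1 P2"
  shows "relabeled_edges (graph_edges specific lbl ty Omega \<pi> Ext) P1
       > relabeled_edges (graph_edges specific lbl ty Omega \<pi> Ext) P2"
proof -
  note tp = assms(1) and op1 = assms(3) and op2 = assms(4) and sf = assms(5)
  define V where "V = graph_vertices Omega \<pi> Ext"
  define E where "E = graph_edges specific lbl ty Omega \<pi> Ext"
  have finV: "finite V" unfolding V_def by (rule gv_finite[OF tp])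
  have finE: "finite E" unfolding E_def by (rule ge_finite[OF tp])
  have fin: "finer P1 P2" using sf unfolding strictly_finer_def by simp
  have posle: "pos v P2 \<le> pos v P1" if v: "v \<in> V" for v
  proof -
    have "before P2 v \<subseteq> before P1 v" by (rule before_mono[OF fin])
    moreover have "before P1 v \<subseteq> V" using before_sub[of P1 v] op_un[OF op1] unfolding V_def by simp
    ultimately have "card (before P2 v) \<le> card (before P1 v)" using finV
      by (meson card_mono finite_subset)
    thus ?thesis using pos_card[OF op1 finV[unfolded V_def] v[unfolded V_def]]
        pos_card[OF op2 finV[unfolded V_def] v[unfolded V_def]] by simp
  qed
  obtain v u where v: "v \<in> V" and u: "u \<in> before P1 v" "u \<notin> before P2 v"
    using strict_exists[OF op1 op2 sf] unfolding V_def by blast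
  have poslt: "pos v P2 < pos v P1"
  proof -
    have "before P2 v \<subset> before P1 v" using before_mono[OF fin, of v] u by blast
    moreover have "before P1 v \<subseteq> V" using before_sub[of P1 v] op_un[OF op1] unfolding V_def by simp
    ultimately have "card (before P2 v) < card (before P1 v)" using finV
      by (meson psubset_card_mono finite_subset)
    thus ?thesis using pos_card[OF op1 finV[unfolded V_def] v[unfolded V_def]]
        pos_card[OF op2 finV[unfolded V_def] v[unfolded V_def]] by simp
  qed
  define h where "h P = (\<lambda>(e, l). ((Min ((\<lambda>v. pos v P) ` e), Max ((\<lambda>v. pos v P) ` e)), l::'l))"
    for P :: "'s option set list"
  have hle: "\<forall>x\<in>E. h P2 x \<le> h P1 x"
  proof
    fix x assume "x \<in> E"
    then obtain a b l where x: "x = ({a,b}, l)" "a \<in> V" "b \<in> V"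
      using edge_form unfolding E_def V_def by metis
    show "h P2 x \<le> h P1 x" unfolding x(1) h_def
      using key_le[of "\<lambda>v. pos v P2" a "\<lambda>v. pos v P1" b l] posle[OF x(2)] posle[OF x(3)] by simp
  qed
  have hlt: "\<exists>x\<in>E. h P2 x < h P1 x"
  proof -
    obtain a l where al: "({v,a}, l) \<in> E"
      using vertex_in_edge[where specific=specific and lbl=lbl and ty=ty, OF tp v[unfolded V_def]] unfolding E_def by blast
    then obtain a' b' l' where "({v,a}, l) = ({a',b'}, l')" "a' \<in> V" "b' \<in> V"
      using edge_form unfolding E_def V_def by metis
    hence aV: "a \<in> V" by (metis doubleton_eq_iff prod.inject)
    have "h P2 ({v,a}, l) < h P1 ({v,a}, l)" unfolding h_def
      using key_less[of "\<lambda>v. pos v P2" v "\<lambda>v. pos v P1" a l] poslt posle[OF aV] by simp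
    thus ?thesis using al by blast
  qed
  have "sorted_list_of_multiset (image_mset (h P2) (mset_set E)) < sorted_list_of_multiset (image_mset (h P1) (mset_set E))"
    by (rule sorted_mset_less[OF finE hle hlt])
  thus ?thesis unfolding relabeled_edges_def E_def h_def by simp
qed

end
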